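(* Let $F=\begin{pmatrix}-1&-1&-1\\-1&8&-1\\-1&-1&-1\end{pmatrix}$ (edge detect C filter). Then for all $m,n\in\mathbb{N}$, it is not the case that the equation $F*X=B$ with the periodic boundary condition, for unknown $X\in\mathbb{R}^{m\times n}$, has a unique solution for every $B\in\mathbb{R}^{m\times n}$.
   Context: For $F=[f_{ij}]\in\mathbb{R}^{3\times3}$ and $X=[x_{ij}]\in\mathbb{R}^{m\times n}$, the convolution $F*X\in\mathbb{R}^{m\times n}$ is defined by $[F*X]_{ij}=\sum_{l_1=1}^3\sum_{l_2=1}^3 f_{l_1l_2}\,x_{i-l_1+2,\,j-l_2+2}$ for $1\le i\le m$, $1\le j\le n$, where the periodic boundary condition sets $x_{0j}=x_{mj}$, $x_{m+1,j}=x_{1j}$, $x_{i0}=x_{in}$, $x_{i,n+1}=x_{i1}$ (for all indices $i\in\{0,\dots,m+1\}$, $j\in\{0,\dots,n+1\}$, so corners are also determined, e.g. $x_{00}=x_{mn}$). *)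

theory Defs
  imports Complex_Main
begin

text \<open>m x n real matrices are represented as functions nat => nat => real,
  indexed by 1..m and 1..n, and zero outside this index range.\<close>

definition mats :: "nat \<Rightarrow> nat \<Rightarrow> (nat \<Rightarrow> nat \<Rightarrow> real) set" where
  "mats m n = {X. \<forall>i j. (i \<notin> {1..m} \<or> j \<notin> {1..n}) \<longrightarrow> X i j = 0}"

definition per :: "nat \<Rightarrow> nat \<Rightarrow> nat" where
  "per k i = (if i = 0 then k else if i = k + 1 then 1 else i)"

definition conv :: "(nat \<Rightarrow> nat \<Rightarrow> real) \<Rightarrow> nat \<Rightarrow> nat \<Rightarrow> (nat \<Rightarrow> nat \<Rightarrow> real)
    \<Rightarrow> nat \<Rightarrow> nat \<Rightarrow> real" where
  "conv F m n X i j =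
     (\<Sum>l1\<in>{1..3}. \<Sum>l2\<in>{1..3}. F l1 l2 * X (per m (i + 2 - l1)) (per n (j + 2 - l2)))"

definition edgeC :: "nat \<Rightarrow> nat \<Rightarrow> real" where
  "edgeC l1 l2 = (if l1 = 2 \<and> l2 = 2 then 8 else -1)"

end

theory Submission
  imports Defs
begin

lemma per_in: "1 \<le> i \<Longrightarrow> i \<le> k \<Longrightarrow> l \<in> {1..3::nat} \<Longrightarrow> per k (i + 2 - l) \<in> {1..k}"
  unfolding per_def by auto

lemma three: "{1..3::nat} = {1,2,3}" by auto

theorem corollary14:
  fixes m n :: nat
  assumes "m \<ge> 1" and "n \<ge> 1"
  shows "\<not> (\<forall>B \<in> mats m n. \<exists>!X. X \<in> mats m n \<and>
            (\<forall>i\<in>{1..m}. \<forall>j\<in>{1..n}. conv edgeC m n X i j = B i j))"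
proof
  assume H: "\<forall>B \<in> mats m n. \<exists>!X. X \<in> mats m n \<and>
            (\<forall>i\<in>{1..m}. \<forall>j\<in>{1..n}. conv edgeC m n X i j = B i j)"
  define Ones where "Ones = (\<lambda>i j::nat. if i \<in> {1..m} \<and> j \<in> {1..n} then (1::real) else 0)"
  have Z: "(\<lambda>i j. 0::real) \<in> mats m n" by (simp add: mats_def)
  have OnesM: "Ones \<in> mats m n" by (auto simp: mats_def Ones_def)
  have c0: "conv edgeC m n (\<lambda>i j. 0) i j = 0" for i j by (simp add: conv_def)
  have c1: "conv edgeC m n Ones i j = 0" if "i \<in> {1..m}" "j \<in> {1..n}" for i j
  proof -
    have "conv edgeC m n Ones i j = (\<Sum>l1\<in>{1..3}. \<Sum>l2\<in>{1..3}. edgeC l1 l2)"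
      unfolding conv_def
      by (intro sum.cong refl, simp add: Ones_def per_in[simplified] that)
        (use per_in that in auto)
    also have "\<dots> = 0" unfolding three by (simp add: edgeC_def del: One_nat_def)
    finally show ?thesis .
  qed
  from H Z have "\<exists>!X. X \<in> mats m n \<and>
            (\<forall>i\<in>{1..m}. \<forall>j\<in>{1..n}. conv edgeC m n X i j = 0)" by auto
  then have "Ones = (\<lambda>i j. 0)" using OnesM Z c0 c1 by blast
  then have "Ones 1 1 = 0" by simp
  then show False using assms by (simp add: Ones_def)
qed

end
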